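(* Let $\mu$ be the Cauchy distribution $d\mu(x)=\frac1\pi\frac{dx}{1+x^2}$, $\alpha\ge0$, $\beta>0$, $s=\alpha+\beta$. For $u_0\in\mathbb R$ let $u=f_{\alpha,\beta}(u_0)$ and $v=v_s(u_0)$. Then \[\frac{du}{du_0}=\frac{(1+v)(s^2+4\alpha v^2(1+v))-(\alpha-\beta)sv}{s(1+v)(s+2v^2(1+v))}.\]
   Context: $v_s(u)=\inf\{v>0:\int\frac{d\mu(x)}{(u-x)^2+v^2}\le\frac1s\}$; $f_{\alpha,\beta}(u_0)=\mathrm{Re}[H_{\alpha-\beta}(u_0+iv_s(u_0))]=u_0+(\alpha-\beta)\int\frac{(u_0-x)\,d\mu(x)}{(u_0-x)^2+v_s(u_0)^2}$, where $H_r(z)=z+r\int\frac{d\mu(x)}{z-x}$. *)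

theory Defs
  imports "HOL-Probability.Probability"
begin

definition cauchy_measure :: "real measure" where
  "cauchy_measure = density lborel (\<lambda>x. ennreal (1 / (pi * (1 + x\<^sup>2))))"

definition v_s :: "real measure \<Rightarrow> real \<Rightarrow> real \<Rightarrow> real" where
  "v_s \<mu> s u = Inf {v. v > 0 \<and> (\<integral>x. 1 / ((u - x)\<^sup>2 + v\<^sup>2) \<partial>\<mu>) \<le> 1 / s}"

definition f_ab :: "real measure \<Rightarrow> real \<Rightarrow> real \<Rightarrow> real \<Rightarrow> real" where
  "f_ab \<mu> \<alpha> \<beta> u0 = u0 + (\<alpha> - \<beta>) *
     (\<integral>x. (u0 - x) / ((u0 - x)\<^sup>2 + (v_s \<mu> (\<alpha> + \<beta>) u0)\<^sup>2) \<partial>\<mu>)"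

end

theory Submission
  imports Defs "HOL-Real_Asymp.Real_Asymp"
begin

lemma integrable_inv1sq: "integrable lborel (\<lambda>x::real. inverse (1 + x^2))"
  using integrable_inverse_1_plus_square
  by (simp add: set_integrable_def einterval_eq_UNIV)

lemma bound_lin_quad:
  fixes u v a b x :: real assumes v: "v > 0"
  shows "abs (a*x+b) \<le> ((abs a)/(2* v) + ((abs a)*(abs u)+(abs b))/v^2) * ((x-u)^2+v^2)"
proof -
  have q: "(x-u)^2+v^2 \<ge> v^2" by simp
  have t: "2* v *\<bar>x-u\<bar> \<le> (x-u)^2+v^2"
  proof -
    have "0 \<le> (abs (x-u) - v)^2" by simp
    then have "0 \<le> (x-u)^2 - 2*abs(x-u)* v + v^2" by (simp only: power2_diff power2_abs)
    then show ?thesis by (simp add: algebra_simps)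
  qed
  have 1: "abs (a*(x-u)) \<le> (abs a)/(2* v) * ((x-u)^2+v^2)"
  proof -
    have "abs (a*(x-u)) = (abs a)/(2* v) * (2* v *\<bar>x-u\<bar>)" using v by (simp add: abs_mult)
    also have "\<dots> \<le> (abs a)/(2* v) * ((x-u)^2+v^2)" using t v by (intro mult_left_mono) auto
    finally show ?thesis .
  qed
  moreover have 2: "abs (a*u+b) \<le> ((abs a)*(abs u)+(abs b))/v^2 * ((x-u)^2+v^2)"
  proof -
    have "abs (a*u+b) \<le> ((abs a)*(abs u)+(abs b))" by (simp add: abs_mult abs_triangle_ineq[THEN order_trans])
    also have "\<dots> = ((abs a)*(abs u)+(abs b))/v^2 * v^2" using v by simp
    also have "\<dots> \<le> ((abs a)*(abs u)+(abs b))/v^2 * ((x-u)^2+v^2)" using q by (intro mult_left_mono) auto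
    finally show ?thesis .
  qed
  moreover have "abs (a*x+b) \<le> abs (a*(x-u)) + abs (a*u+b)"
    using abs_triangle_ineq[of "a*(x-u)" "a*u+b"] by (simp add: algebra_simps)
  ultimately show ?thesis using 1 2 unfolding distrib_right by linarith
qed

lemma L1_deriv:
  fixes u v A B x :: real assumes v: "v > 0"
  shows "((\<lambda>x::real. A/2*(ln (x^2+1) - ln ((x-u)^2+v^2)) + B*arctan x + (u*A-B)/v * arctan ((x-u)/v)) has_real_derivative 
   A/2*(2*x/(x^2+1) - 2*(x-u)/((x-u)^2+v^2)) + B/(1+x^2)
            + (u*A-B)/v * ((1/v)/(1+((x-u)/v)^2))) (at x)"
proof -
  have Q: "(x-u)^2+v^2 > 0" using v by (simp add: add_nonneg_pos)
  have P: "x^2+1 > 0" by (simp add: add_nonneg_pos)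
  show ?thesis
    using P Q v apply (auto intro!: derivative_eq_intros)
    apply (simp add: field_simps)
    done
qed
lemma L1_alg:
  fixes u v A B x :: real assumes v: "v > 0"
  shows "A/2*(2*x/(x^2+1) - 2*(x-u)/((x-u)^2+v^2)) + B/(1+x^2)
            + (u*A-B)/v * ((1/v)/(1+((x-u)/v)^2)) = ((A*(u^2+v^2-1) - 2*u*B)*x + (B*(u^2+v^2-1) + 2*u*A)) / ((x^2+1)*((x-u)^2+v^2))"
proof -
  have Q: "(x-u)^2+v^2 > 0" using v by (simp add: add_nonneg_pos)
  have P: "x^2+1 > 0" by (simp add: add_nonneg_pos)
  have e: "(1/v)/(1+((x-u)/v)^2) = v/((x-u)^2+v^2)" using v Q
    by (simp add: field_simps power2_eq_square)
  show ?thesis unfolding e using v P Q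
    apply (simp add: divide_simps)
    apply (simp add: algebra_simps power2_eq_square)
    done
qed
lemma int_lq:
  fixes u v a b :: real assumes v: "v > 0"
  shows "integrable lborel (\<lambda>x. (a*x + b) / ((x^2+1)*((x-u)^2+v^2)))"
proof -
  define C where "C = (abs a)/(2* v) + ((abs a)*(abs u)+(abs b))/v^2"
  define g where "g = (\<lambda>x::real. (a*x + b) / ((x^2+1)*((x-u)^2+v^2)))"
  have Qpos: "(x-u)^2+v^2 > 0" for x using v by (simp add: add_nonneg_pos)
  have Ppos: "x^2+1 > 0" for x::real by (simp add: add_nonneg_pos)
  have int: "integrable lborel g"
  proof (rule Bochner_Integration.integrable_bound[OF integrable_mult_right[OF integrable_inv1sq, of C]])
    show "g \<in> borel_measurable lborel" unfolding g_def by measurable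
    show "AE x in lborel. norm (g x) \<le> norm (C * inverse (1 + x^2))"
    proof (intro AE_I2)
      fix x :: real
      have b: "abs (a*x+b) \<le> C * ((x-u)^2+v^2)" unfolding C_def by (rule bound_lin_quad[OF v])
      have "norm (g x) = abs (a*x+b) / ((x-u)^2+v^2) * inverse (1+x^2)"
        unfolding g_def using Qpos[of x] Ppos[of x] by (simp add: abs_mult field_simps)
      also have "\<dots> \<le> C * inverse (1+x^2)"
        using b Qpos[of x] Ppos[of x] by (intro mult_right_mono) (auto simp: divide_le_eq)
      also have "\<dots> \<le> norm (C * inverse (1 + x^2))" by simp
      finally show "norm (g x) \<le> norm (C * inverse (1 + x^2))" .
    qed
  qed
  then show ?thesis unfolding g_def .
qed

lemma L1:
  fixes u v A B :: real assumes v: "v > 0"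
  defines "k \<equiv> u^2+v^2-1"
  shows "integrable lborel (\<lambda>x. ((A*k - 2*u*B)*x + (B*k + 2*u*A)) / ((x^2+1)*((x-u)^2+v^2)))"
    and "integral\<^sup>L lborel (\<lambda>x. ((A*k - 2*u*B)*x + (B*k + 2*u*A)) / ((x^2+1)*((x-u)^2+v^2)))
          = pi*(B + (u*A-B)/v)"
proof -
  define a where "a = A*k - 2*u*B"
  define b where "b = B*k + 2*u*A"
  define C where "C = (abs a)/(2* v) + ((abs a)*(abs u)+(abs b))/v^2"
  define g where "g = (\<lambda>x::real. (a*x + b) / ((x^2+1)*((x-u)^2+v^2)))"
  have Qpos: "(x-u)^2+v^2 > 0" for x using v by (simp add: add_nonneg_pos)
  have Ppos: "x^2+1 > 0" for x::real by (simp add: add_nonneg_pos)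
  have int: "integrable lborel g" unfolding g_def by (rule int_lq[OF v])
  then show "integrable lborel (\<lambda>x. ((A*k - 2*u*B)*x + (B*k + 2*u*A)) / ((x^2+1)*((x-u)^2+v^2)))"
    unfolding g_def a_def b_def .
  define F where "F = (\<lambda>x::real. A/2*(ln (x^2+1) - ln ((x-u)^2+v^2)) + B*arctan x + (u*A-B)/v * arctan ((x-u)/v))"
  have lt: "((\<lambda>x. ln (x^2+1) - ln ((x-u)^2+v^2)) \<longlongrightarrow> 0) at_top"
    "((\<lambda>x. ln (x^2+1) - ln ((x-u)^2+v^2)) \<longlongrightarrow> 0) at_bot"
    "((\<lambda>x. arctan ((x-u)/v)) \<longlongrightarrow> pi/2) at_top"
    "((\<lambda>x. arctan ((x-u)/v)) \<longlongrightarrow> -(pi/2)) at_bot"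
    using v by real_asymp+
  have lt2: "(arctan \<longlongrightarrow> pi/2) at_top" "(arctan \<longlongrightarrow> -(pi/2)) at_bot"
    by real_asymp+
  have Ftop: "(F \<longlongrightarrow> A/2*0 + B*(pi/2) + (u*A-B)/v *(pi/2)) at_top"
    unfolding F_def by (intro tendsto_intros lt lt2)
  have Fbot: "(F \<longlongrightarrow> A/2*0 + B*(-(pi/2)) + (u*A-B)/v *(-(pi/2))) at_bot"
    unfolding F_def by (intro tendsto_intros lt lt2)
  have deriv: "(F has_real_derivative g x) (at x)" for x
    using L1_deriv[OF v, of A u B x] unfolding F_def g_def a_def b_def k_def L1_alg[OF v] .
  have "(LBINT x=-\<infinity>..\<infinity>. g x) = (A/2*0 + B*(pi/2) + (u*A-B)/v *(pi/2)) - (A/2*0 + B*(-(pi/2)) + (u*A-B)/v *(-(pi/2)))"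
  proof (rule interval_integral_FTC_integrable)
    show "(F has_vector_derivative g x) (at x)" for x
      using deriv[of x] by (simp add: has_real_derivative_iff_has_vector_derivative)
    show "isCont g x" for x unfolding g_def using Qpos[of x] Ppos[of x]
      by (intro continuous_intros) auto
    show "set_integrable lborel (einterval (-\<infinity>) \<infinity>) g"
      using int by (simp add: set_integrable_def einterval_eq_UNIV)
    show "((F \<circ> real_of_ereal) \<longlongrightarrow> A/2*0 + B*(-(pi/2)) + (u*A-B)/v *(-(pi/2))) (at_right (-\<infinity>))"
      using Fbot by (simp add: ereal_tendsto_simps1)
    show "((F \<circ> real_of_ereal) \<longlongrightarrow> A/2*0 + B*(pi/2) + (u*A-B)/v *(pi/2)) (at_left \<infinity>)"
      using Ftop by (simp add: ereal_tendsto_simps1)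
  qed simp
  moreover have "(LBINT x=-\<infinity>..\<infinity>. g x) = integral\<^sup>L lborel g"
    by (simp add: interval_lebesgue_integral_def set_lebesgue_integral_def einterval_eq_UNIV)
  moreover have "(A/2*0 + B*(pi/2) + (u*A-B)/v *(pi/2)) - (A/2*0 + B*(-(pi/2)) + (u*A-B)/v *(-(pi/2)))
     = pi*(B + (u*A-B)/v)"
    by (simp add: field_simps)
  ultimately have "integral\<^sup>L lborel g = pi*(B + (u*A-B)/v)" by simp
  then show "integral\<^sup>L lborel (\<lambda>x. ((A*k - 2*u*B)*x + (B*k + 2*u*A)) / ((x^2+1)*((x-u)^2+v^2)))
          = pi*(B + (u*A-B)/v)"
    unfolding g_def a_def b_def .
qed



lemma alg2:
  fixes p x c0 c1 :: real
  assumes "p \<noteq> 0" "x^2 = p - 1"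
  shows "c0*(1/p/2 + (p - x*(2*x))/(2*p^2)) + c1*(2*x)/(2*p^2) = (c1*x+c0)/(p*p)"
proof -
  have "x*(2*x) = 2*p - 2" using assms(2) by (simp add: power2_eq_square)
  then have "c0*(1/p/2 + (p - x*(2*x))/(2*p^2)) + c1*(2*x)/(2*p^2) = c0*(1/p/2 + (2 - p)/(2*p^2)) + c1*(2*x)/(2*p^2)"
    by simp
  also have "\<dots> = (c1*x+c0)/(p*p)" using assms(1) by (simp add: field_simps power2_eq_square)
  finally show ?thesis .
qed

lemma L2:
  fixes c1 c0 :: real
  shows "integral\<^sup>L lborel (\<lambda>x. (c1*x + c0) / ((x^2+1)*((x-0)^2+1^2))) = c0*pi/2"
proof -
  define g where "g = (\<lambda>x::real. (c1*x + c0) / ((x^2+1)*((x-0)^2+1^2)))"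
  have int: "integrable lborel g"
    unfolding g_def by (rule int_lq) simp
  define F where "F = (\<lambda>x::real. c0*(arctan x/2 + x/(2*(1+x^2))) - c1*(1/(2*(1+x^2))))"
  have Ppos: "x^2+1 > 0" for x::real by (simp add: add_nonneg_pos)
  have lt: "((\<lambda>x::real. x/(2*(1+x^2))) \<longlongrightarrow> 0) at_top"
    "((\<lambda>x::real. x/(2*(1+x^2))) \<longlongrightarrow> 0) at_bot"
    "((\<lambda>x::real. 1/(2*(1+x^2))) \<longlongrightarrow> 0) at_top"
    "((\<lambda>x::real. 1/(2*(1+x^2))) \<longlongrightarrow> 0) at_bot"
    "(arctan \<longlongrightarrow> pi/2) at_top" "(arctan \<longlongrightarrow> -(pi/2)) at_bot"
    by real_asymp+
  have Ftop: "(F \<longlongrightarrow> c0*((pi/2)/2 + 0) - c1*0) at_top"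
    unfolding F_def by (intro tendsto_intros lt) auto
  have Fbot: "(F \<longlongrightarrow> c0*((-(pi/2))/2 + 0) - c1*0) at_bot"
    unfolding F_def by (intro tendsto_intros lt) auto
  have deriv: "(F has_real_derivative g x) (at x)" for x
  proof -
    have nz: "1 + x^2 \<noteq> 0" "2 + 2*x^2 \<noteq> 0" "x^2+1 \<noteq> 0"
      by (auto simp: add_nonneg_eq_0_iff)
    show ?thesis unfolding F_def g_def
      apply (auto intro!: derivative_eq_intros simp: nz)
      apply (simp add: divide_simps nz)
      apply algebra
      done
  qed
  have "(LBINT x=-\<infinity>..\<infinity>. g x) = (c0*((pi/2)/2 + 0) - c1*0) - (c0*((-(pi/2))/2 + 0) - c1*0)"
  proof (rule interval_integral_FTC_integrable)
    show "(F has_vector_derivative g x) (at x)" for x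
      using deriv[of x] by (simp add: has_real_derivative_iff_has_vector_derivative)
    show "isCont g x" for x unfolding g_def using Ppos[of x]
      by (intro continuous_intros) auto
    show "set_integrable lborel (einterval (-\<infinity>) \<infinity>) g"
      using int by (simp add: set_integrable_def einterval_eq_UNIV)
    show "((F \<circ> real_of_ereal) \<longlongrightarrow> c0*((-(pi/2))/2 + 0) - c1*0) (at_right (-\<infinity>))"
      using Fbot by (simp add: ereal_tendsto_simps1)
    show "((F \<circ> real_of_ereal) \<longlongrightarrow> c0*((pi/2)/2 + 0) - c1*0) (at_left \<infinity>)"
      using Ftop by (simp add: ereal_tendsto_simps1)
  qed simp
  moreover have "(LBINT x=-\<infinity>..\<infinity>. g x) = integral\<^sup>L lborel g"
    by (simp add: interval_lebesgue_integral_def set_lebesgue_integral_def einterval_eq_UNIV)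
  ultimately show ?thesis unfolding g_def by (simp add: field_simps)
qed



lemma cauchy_int:
  fixes h :: "real \<Rightarrow> real"
  assumes "h \<in> borel_measurable borel"
  shows "integral\<^sup>L cauchy_measure h = integral\<^sup>L lborel (\<lambda>x. 1/(pi*(1+x^2)) * h x)"
  unfolding cauchy_measure_def using assms by (subst integral_density) auto

lemma CI_gen:
  fixes u v c1 c0 :: real assumes v: "v > 0"
  shows "(\<integral>x. (c1*x+c0)/((u-x)^2+v^2) \<partial>cauchy_measure)
       = 1/pi * integral\<^sup>L lborel (\<lambda>x. (c1*x + c0) / ((x^2+1)*((x-u)^2+v^2)))"
proof -
  have "(\<integral>x. (c1*x+c0)/((u-x)^2+v^2) \<partial>cauchy_measure)
     = integral\<^sup>L lborel (\<lambda>x. 1/pi * ((c1*x + c0) / ((x^2+1)*((x-u)^2+v^2))))"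
    by (subst cauchy_int) (auto simp: power2_commute add.commute mult.assoc)
  also have "\<dots> = 1/pi * integral\<^sup>L lborel (\<lambda>x. (c1*x + c0) / ((x^2+1)*((x-u)^2+v^2)))"
    by (rule integral_mult_right_zero)
  finally show ?thesis .
qed

lemma div_helper:
  fixes D N c :: real assumes "D \<noteq> 0" "N = c*D"
  shows "N / D = c" using assms by simp

lemma CI_gen2:
  fixes u v c1 c0 :: real assumes v: "v > 0" and nd: "\<not> (u = 0 \<and> v = 1)"
  defines "k \<equiv> u^2+v^2-1"
  defines "\<Delta> \<equiv> k^2 + 4*u^2"
  shows "(\<integral>x. (c1*x+c0)/((u-x)^2+v^2) \<partial>cauchy_measure)
       = ((c1*k+2*u*c0) * u + (c0*k - 2*u*c1) * (v-1))/(\<Delta>* v)"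
proof -
  have D: "\<Delta> \<noteq> 0"
  proof
    assume "\<Delta> = 0"
    then have "k^2 = 0 \<and> 4*u^2 = 0" unfolding \<Delta>_def by (simp add: add_nonneg_eq_0_iff)
    then have "u = 0" "v^2 = 1" unfolding k_def by auto
    then show False using nd v by (auto simp: power2_eq_1_iff)
  qed
  define A where "A = (c1*k+2*u*c0)/\<Delta>"
  define B where "B = (c0*k - 2*u*c1)/\<Delta>"
  have n1: "(c1*k+2*u*c0)*k - 2*u*(c0*k-2*u*c1) = c1*\<Delta>" unfolding \<Delta>_def by algebra
  have n2: "(c0*k-2*u*c1)*k + 2*u*(c1*k+2*u*c0) = c0*\<Delta>" unfolding \<Delta>_def by algebra
  have e1: "A*k - 2*u*B = c1"
  proof -
    have "A*k - 2*u*B = ((c1*k+2*u*c0)*k - 2*u*(c0*k-2*u*c1))/\<Delta>"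
      unfolding A_def B_def using D by (simp add: field_simps)
    also have "\<dots> = c1" using D n1 by simp
    finally show ?thesis .
  qed
  have e2: "B*k + 2*u*A = c0"
  proof -
    have "B*k + 2*u*A = ((c0*k-2*u*c1)*k + 2*u*(c1*k+2*u*c0))/\<Delta>"
      unfolding A_def B_def using D by (simp add: field_simps)
    also have "\<dots> = c0" using D n2 by simp
    finally show ?thesis .
  qed
  note e = e1 e2
  have "(\<integral>x. (c1*x+c0)/((u-x)^2+v^2) \<partial>cauchy_measure) = 1/pi * (pi*(B + (u*A-B)/v))"
    using L1(2)[where u=u and A=A and B=B, OF v] unfolding CI_gen[OF v] e[unfolded k_def] by simp
  also have "\<dots> = (A*u + B*(v-1))/v" using v by (simp add: field_simps)
  also have "\<dots> = ((c1*k+2*u*c0) * u + (c0*k - 2*u*c1) * (v-1))/(\<Delta>* v)"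
    unfolding A_def B_def using D v by (simp add: field_simps)
  finally show ?thesis .
qed

lemma CI_gen_deg:
  fixes c1 c0 :: real
  shows "(\<integral>x. (c1*x+c0)/((0-x)^2+1^2) \<partial>cauchy_measure) = c0/2"
proof -
  have "(\<integral>x. (c1*x+c0)/((0-x)^2+1^2) \<partial>cauchy_measure)
     = 1/pi * integral\<^sup>L lborel (\<lambda>x. (c1*x + c0) / ((x^2+1)*((x-0)^2+1^2)))"
    by (rule CI_gen) simp
  also have "\<dots> = 1/pi * (c0*pi/2)" by (simp only: L2)
  also have "\<dots> = c0/2" by simp
  finally show ?thesis .
qed

lemma CI1:
  fixes u v :: real assumes v: "v > 0"
  shows "(\<integral>x. 1/((u-x)^2+v^2) \<partial>cauchy_measure) = (1+v)/(v *(u^2+(1+v)^2))"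
proof (cases "u = 0 \<and> v = 1")
  case True
  then show ?thesis using CI_gen_deg[of 0 1] by simp
next
  case False
  define k where "k = u^2+v^2-1"
  define M where "M = u^2+(1-v)^2"
  define R where "R = u^2+(1+v)^2"
  have R: "R > 0" unfolding R_def using v by (simp add: add_nonneg_pos)
  have M: "M \<noteq> 0" unfolding M_def using False by (auto simp: add_nonneg_eq_0_iff)
  have "(\<integral>x. 1/((u-x)^2+v^2) \<partial>cauchy_measure) = (\<integral>x. (0*x+1)/((u-x)^2+v^2) \<partial>cauchy_measure)" by simp
  also have "\<dots> = ((0*k+2*u*1) * u + (1*k - 2*u*0) * (v-1))/((k^2 + 4*u^2)* v)"
    unfolding k_def by (rule CI_gen2[OF v False])
  also have "((0*k+2*u*1) * u + (1*k - 2*u*0) * (v-1)) = (1+v)*M"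
    unfolding k_def M_def by algebra
  also have "(k^2 + 4*u^2) = R*M" unfolding k_def M_def R_def by algebra
  also have "(1+v)*M/(R*M* v) = (1+v)/(v *R)" using M by simp
  finally show ?thesis unfolding R_def .
qed

lemma CI2:
  fixes u v :: real assumes v: "v > 0"
  shows "(\<integral>x. (u-x)/((u-x)^2+v^2) \<partial>cauchy_measure) = u/(u^2+(1+v)^2)"
proof (cases "u = 0 \<and> v = 1")
  case True
  then show ?thesis using CI_gen_deg[of "-1" 0] by simp
next
  case False
  define k where "k = u^2+v^2-1"
  define M where "M = u^2+(1-v)^2"
  define R where "R = u^2+(1+v)^2"
  have R: "R > 0" unfolding R_def using v by (simp add: add_nonneg_pos)
  have M: "M \<noteq> 0" unfolding M_def using False by (auto simp: add_nonneg_eq_0_iff)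
  have "(\<integral>x. (u-x)/((u-x)^2+v^2) \<partial>cauchy_measure) = (\<integral>x. ((-1)*x+u)/((u-x)^2+v^2) \<partial>cauchy_measure)" by simp
  also have "\<dots> = (((-1)*k+2*u*u) * u + (u*k - 2*u*(-1)) * (v-1))/((k^2 + 4*u^2)* v)"
    unfolding k_def by (rule CI_gen2[OF v False])
  also have "(((-1)*k+2*u*u) * u + (u*k - 2*u*(-1)) * (v-1)) = u* v *M"
    unfolding k_def M_def by algebra
  also have "(k^2 + 4*u^2) = R*M" unfolding k_def M_def R_def by algebra
  also have "u* v *M/(R*M* v) = u/R" using M v by simp
  finally show ?thesis unfolding R_def .
qed



definition hh :: "real \<Rightarrow> real \<Rightarrow> real" where
  "hh s z = s * (1+z)/z - (1+z)^2"

definition WW :: "real \<Rightarrow> real \<Rightarrow> real" where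
  "WW s w = Inf {z. z > 0 \<and> s * (1+z) \<le> z * (w+(1+z)^2)}"

lemma phi_fact:
  fixes s z y :: real assumes "z > 0"
  shows "y * (hh s z + (1+y)^2) - s * (1+y) = (y-z) * (s/z + y * (2+y+z))"
  using assms unfolding hh_def by (simp add: field_simps) algebra

lemma W_h:
  fixes s z :: real assumes s: "s > 0" and z: "z > 0"
  shows "WW s (hh s z) = z"
proof -
  have "{y. y > 0 \<and> s * (1+y) \<le> y * (hh s z+(1+y)^2)} = {z..}"
  proof (intro set_eqI iffI)
    fix y assume "y \<in> {y. y > 0 \<and> s * (1+y) \<le> y * (hh s z+(1+y)^2)}"
    then have y: "y > 0" and le: "0 \<le> y * (hh s z + (1+y)^2) - s * (1+y)" by auto
    have pos: "s/z + y * (2+y+z) > 0" using s z y by (simp add: add_pos_pos)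
    from le have "0 \<le> (y-z) * (s/z + y * (2+y+z))" by (simp only: phi_fact[OF z])
    then have "y - z \<ge> 0" using pos by (simp add: zero_le_mult_iff)
    then show "y \<in> {z..}" by simp
  next
    fix y assume "y \<in> {z..}"
    then have y: "y \<ge> z" by simp
    then have yp: "y > 0" using z by simp
    have pos: "s/z + y * (2+y+z) > 0" using s z yp by (simp add: add_pos_pos)
    have "0 \<le> (y-z) * (s/z + y * (2+y+z))" using y pos by simp
    then have "0 \<le> y * (hh s z + (1+y)^2) - s * (1+y)" by (simp only: phi_fact[OF z])
    then show "y \<in> {y. y > 0 \<and> s * (1+y) \<le> y * (hh s z+(1+y)^2)}" using yp by simp
  qed
  then show ?thesis unfolding WW_def by simp
qed

lemma hh_cont: "z \<noteq> 0 \<Longrightarrow> isCont (hh s) z"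
  unfolding hh_def by (intro continuous_intros) auto

lemma h_surj:
  fixes s w :: real assumes s: "s > 0"
  shows "\<exists>z>0. hh s z = w"
proof -
  define z1 where "z1 = min 1 (s/(abs w+4))"
  define z2 where "z2 = 2 * s + abs w + 1"
  have z1p: "z1 > 0" unfolding z1_def using s by simp
  have z1le: "z1 \<le> 1" unfolding z1_def by simp
  have z12: "z1 \<le> z2" using z1le s unfolding z2_def by simp
  have "hh s z1 \<ge> w"
  proof -
    have "s/z1 \<ge> abs w+4"
    proof -
      have "z1 \<le> s/(abs w+4)" unfolding z1_def by simp
      then have "z1  *  (abs w+4) \<le> s" by (simp add: le_divide_eq)
      then show ?thesis using z1p by (simp add: le_divide_eq mult.commute)
    qed
    moreover have "s * (1+z1)/z1 \<ge> s/z1" using s z1p by (simp add: divide_right_mono)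
    moreover have "(1+z1)^2 \<le> 4" using power_mono[of "1+z1" 2 2] z1le z1p by simp
    moreover have "w \<le> abs w" by simp
    ultimately show ?thesis unfolding hh_def by linarith
  qed
  moreover have "hh s z2 \<le> w"
  proof -
    have z2g: "z2 \<ge> 1" unfolding z2_def using s by simp
    have "s * (1+z2)/z2 = s/z2 + s" using z2g by (simp add: field_simps)
    also have "\<dots> \<le> 2 * s" using s z2g by (simp add: divide_le_eq)
    finally have a: "s * (1+z2)/z2 \<le> 2 * s" .
    have e: "(1+z2)^2 = 1 + 2 * z2 + z2 * z2" by (simp add: power2_eq_square algebra_simps)
    have "0 \<le> z2 * z2" by simp
    then have "(1+z2)^2 \<ge> z2" using e z2g by linarith
    then show ?thesis unfolding hh_def using a unfolding z2_def by simp
  qed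
  moreover have "continuous_on {z1..z2} (hh s)"
    using z1p by (intro continuous_at_imp_continuous_on ballI hh_cont) auto
  ultimately obtain z where "z1 \<le> z" "z \<le> z2" "hh s z = w"
    using IVT2'[of "hh s" z2 w z1] z12 by blast
  then show ?thesis using z1p by (intro exI[of _ z]) auto
qed

lemma W_props:
  fixes s w :: real assumes s: "s > 0"
  shows "WW s w > 0" "hh s (WW s w) = w"
proof -
  obtain z where z: "z > 0" "hh s z = w" using h_surj[OF s] by blast
  then have "WW s w = z" using W_h[OF s z(1)] by simp
  then show "WW s w > 0" "hh s (WW s w) = w" using z by auto
qed

lemma vs_eq:
  fixes s u :: real assumes s: "s > 0"
  shows "v_s cauchy_measure s u = WW s (u^2)"
proof -
  have "{v. v > 0 \<and> (\<integral>x. 1 / ((u - x)\<^sup>2 + v\<^sup>2) \<partial>cauchy_measure) \<le> 1 / s}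
      = {z. z > 0 \<and> s * (1+z) \<le> z * (u^2+(1+z)^2)}"
  proof (intro Collect_cong conj_cong refl)
    fix v :: real assume v: "v > 0"
    have R: "u^2+(1+v)^2 > 0" using v by (simp add: add_nonneg_pos)
    have "(\<integral>x. 1 / ((u - x)\<^sup>2 + v\<^sup>2) \<partial>cauchy_measure) = (1+v)/(v * (u^2+(1+v)^2))"
      by (rule CI1[OF v])
    moreover have "(1+v)/(v * (u^2+(1+v)^2)) \<le> 1/s \<longleftrightarrow> s * (1+v) \<le> v * (u^2+(1+v)^2)"
      using v R s by (simp add: divide_simps mult.commute)
    ultimately show "(\<integral>x. 1 / ((u - x)\<^sup>2 + v\<^sup>2) \<partial>cauchy_measure) \<le> 1 / s \<longleftrightarrow> s * (1+v) \<le> v * (u^2+(1+v)^2)"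
      by simp
  qed
  then show ?thesis unfolding v_s_def WW_def by simp
qed



lemma final_alg:
  fixes V s \<alpha> \<beta> u0 :: real
  assumes V: "V > 0" and s: "s > 0" and sab: "s = \<alpha> + \<beta>"
    and q: "u0^2 = s * (1+V)/V - (1+V)^2"
  shows "1 + (\<alpha>-\<beta>) * ((1 * (u0^2+(1+V)^2) - u0 * (2 * u0 + 2 * (1+V) * (inverse (-s/V^2 - 2 * (1+V)) * (2 * u0))))
            / ((u0^2+(1+V)^2) * (u0^2+(1+V)^2)))
       = ((1 + V) * (s\<^sup>2 + 4 * \<alpha> * V\<^sup>2 * (1 + V)) - (\<alpha> - \<beta>) * s * V)
          / (s * (1 + V) * (s + 2 * V\<^sup>2 * (1 + V)))"
proof -
  define E where "E = s + 2 * V^2 * (1+V)"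
  have Ep: "E > 0" unfolding E_def using V s by (simp add: add_pos_pos)
  have invD: "inverse (-s/V^2 - 2 * (1+V)) = -(V^2)/E"
    unfolding E_def using V Ep[unfolded E_def] by (simp add: field_simps)
  have R: "u0^2+(1+V)^2 = s * (1+V)/V" using q by simp
  have m: "u0 * (2 * u0 + 2 * (1+V) * (-(V^2)/E * (2 * u0))) = u0^2 * (2 - 4 * (1+V) * V^2/E)"
    by (simp add: power2_eq_square algebra_simps)
  show ?thesis unfolding invD R m q using V s Ep
    apply (simp add: divide_simps E_def)
    unfolding sab
    apply algebra
    done
qed


lemma hh_deriv:
  fixes s z :: real assumes z: "z > 0"
  shows "(hh s has_real_derivative (-s/z^2 - 2 * (1+z))) (at z)"
proof -
  have e: "hh s = (\<lambda>z. s * (1+z)/z - (1+z)^2)" by (rule ext) (simp add: hh_def)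
  have nz: "z \<noteq> 0" using z by simp
  show ?thesis unfolding e
    apply (auto intro!: derivative_eq_intros simp: nz)
    apply (simp add: divide_simps nz)
    apply algebra
    done
qed

theorem lemma6p7:
  fixes \<alpha> \<beta> u0 :: real
  assumes "\<alpha> \<ge> 0" and "\<beta> > 0"
  defines "s \<equiv> \<alpha> + \<beta>"
  defines "v \<equiv> v_s cauchy_measure s u0"
  shows "(f_ab cauchy_measure \<alpha> \<beta> has_real_derivative
          ((1 + v) * (s\<^sup>2 + 4 * \<alpha> * v\<^sup>2 * (1 + v)) - (\<alpha> - \<beta>) * s * v)
          / (s * (1 + v) * (s + 2 * v\<^sup>2 * (1 + v)))) (at u0)"
proof -
  have s: "s > 0" unfolding s_def using assms(1,2) by simp
  have sab: "s = \<alpha> + \<beta>" unfolding s_def ..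
  define Wc where "Wc = (\<lambda>u::real. WW s (u^2))"
  define V where "V = Wc u0"
  have vV: "v = V" unfolding v_def V_def Wc_def by (rule vs_eq[OF s])
  have Vp: "V > 0" unfolding V_def Wc_def by (rule W_props(1)[OF s])
  have hV: "hh s V = u0^2" unfolding V_def Wc_def by (rule W_props(2)[OF s])
  have fe: "f_ab cauchy_measure \<alpha> \<beta> = (\<lambda>u. u + (\<alpha>-\<beta>) * (u/(u^2+(1+Wc u)^2)))"
  proof (rule ext)
    fix u :: real
    have "f_ab cauchy_measure \<alpha> \<beta> u = u + (\<alpha>-\<beta>) *
       (\<integral>x. (u - x) / ((u - x)\<^sup>2 + (WW s (u^2))\<^sup>2) \<partial>cauchy_measure)"
      unfolding f_ab_def sab[symmetric] vs_eq[OF s] ..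
    also have "\<dots> = u + (\<alpha>-\<beta>) * (u/(u^2+(1+Wc u)^2))"
      unfolding Wc_def CI2[OF W_props(1)[OF s]] ..
    finally show "f_ab cauchy_measure \<alpha> \<beta> u = u + (\<alpha>-\<beta>) * (u/(u^2+(1+Wc u)^2))" .
  qed
  define D where "D = -s/V^2 - 2 * (1+V)"
  have Dd: "(hh s has_real_derivative D) (at V)" unfolding D_def by (rule hh_deriv[OF Vp])
  have Dn: "D \<noteq> 0"
  proof -
    have "s/V^2 > 0" using s Vp by simp
    then have "D < 0" unfolding D_def using Vp by simp
    then show ?thesis by simp
  qed
  have cont: "isCont (WW s) (u0^2)"
  proof -
    have "isCont (WW s) (hh s V)"
    proof (rule isCont_inverse_function[where d="V/2" and x=V and f="hh s" and g="WW s"])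
      show "0 < V/2" using Vp by simp
    next
      fix z assume "\<bar>z - V\<bar> \<le> V/2"
      then have zp: "z > 0" using Vp abs_ge_minus_self[of "z-V"] by linarith
      show "WW s (hh s z) = z" by (rule W_h[OF s zp])
    next
      fix z assume "\<bar>z - V\<bar> \<le> V/2"
      then have zp: "z > 0" using Vp abs_ge_minus_self[of "z-V"] by linarith
      show "isCont (hh s) z" using zp by (intro hh_cont) simp
    qed
    then show ?thesis unfolding hV .
  qed
  have WWd: "DERIV (WW s) (u0^2) :> inverse D"
  proof (rule DERIV_inverse_function[where f="hh s" and a="u0^2-1" and b="u0^2+1"])
    show "DERIV (hh s) (WW s (u0^2)) :> D" using Dd unfolding V_def Wc_def .
    show "D \<noteq> 0" by (rule Dn)
    show "u0^2 - 1 < u0^2" "u0^2 < u0^2 + 1" by simp_all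
    show "hh s (WW s y) = y" for y by (rule W_props(2)[OF s])
    show "isCont (WW s) (u0^2)" by (rule cont)
  qed
  have WD: "(Wc has_real_derivative inverse D * (2 * u0)) (at u0)"
  proof -
    have "((\<lambda>u::real. u^2) has_real_derivative 2 * u0) (at u0)"
      by (auto intro!: derivative_eq_intros)
    from DERIV_chain2[OF WWd this] show ?thesis unfolding Wc_def .
  qed
  define R where "R = u0^2+(1+V)^2"
  have Rn: "R \<noteq> 0" unfolding R_def using Vp by (simp add: add_nonneg_eq_0_iff)
  have d1: "((\<lambda>u. u^2+(1+Wc u)^2) has_real_derivative (2 * u0 + 2 * (1+V) * (inverse D * (2 * u0)))) (at u0)"
  proof -
    have a: "((\<lambda>u::real. u^2) has_real_derivative 2 * u0) (at u0)"
      by (auto intro!: derivative_eq_intros)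
    have b: "((\<lambda>u. 1 + Wc u) has_real_derivative inverse D * (2 * u0)) (at u0)"
      using DERIV_add[OF DERIV_const[of 1] WD] by simp
    have c: "((\<lambda>u. (1 + Wc u)^2) has_real_derivative of_nat 2 * ((inverse D * (2 * u0)) * (1 + Wc u0)^(2 - Suc 0))) (at u0)"
      by (rule DERIV_power[OF b])
    have "((\<lambda>u. u^2+(1+Wc u)^2) has_real_derivative 2 * u0 + of_nat 2 * ((inverse D * (2 * u0)) * (1 + Wc u0)^(2 - Suc 0))) (at u0)"
      by (rule DERIV_add[OF a c])
    moreover have "2 * u0 + of_nat 2 * ((inverse D * (2 * u0)) * (1 + Wc u0)^(2 - Suc 0))
       = 2 * u0 + 2 * (1+V) * (inverse D * (2 * u0))" unfolding V_def by (simp add: algebra_simps)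
    ultimately show ?thesis by (simp only:)
  qed
  have d2: "((\<lambda>u. u/(u^2+(1+Wc u)^2)) has_real_derivative
      ((1 * R - u0 * (2 * u0 + 2 * (1+V) * (inverse D * (2 * u0)))) / (R * R))) (at u0)"
    using DERIV_divide[OF DERIV_ident d1] Rn unfolding R_def V_def by simp
  have d3: "((\<lambda>u. u + (\<alpha>-\<beta>) * (u/(u^2+(1+Wc u)^2))) has_real_derivative
      1 + (\<alpha>-\<beta>) * ((1 * R - u0 * (2 * u0 + 2 * (1+V) * (inverse D * (2 * u0)))) / (R * R))) (at u0)"
    by (rule DERIV_add[OF DERIV_ident DERIV_cmult[OF d2]])
  have q: "u0^2 = s * (1+V)/V - (1+V)^2" using hV unfolding hh_def by simp
  have fin: "1 + (\<alpha>-\<beta>) * ((1 * R - u0 * (2 * u0 + 2 * (1+V) * (inverse D * (2 * u0)))) / (R * R))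
     = ((1 + V) * (s\<^sup>2 + 4 * \<alpha> * V\<^sup>2 * (1 + V)) - (\<alpha> - \<beta>) * s * V)
          / (s * (1 + V) * (s + 2 * V\<^sup>2 * (1 + V)))"
    unfolding R_def D_def by (rule final_alg[OF Vp s sab q])
  show ?thesis using d3 unfolding fe fin vV .
qed


end
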